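(* Let $(G,\mathcal{B}_1,\mathcal{B}_2)$ be a Rota-Baxter system of groups with descendent operation $\circ$. For every $t\in G$, $G_t=G\circ e_t:=\{a\circ e_t\mid a\in G\}$, and $(G_t,\circ)$ is a group with identity element $e_t$.
   Context: A Rota-Baxter system of groups is a triple $(G,\mathcal{B}_1,\mathcal{B}_2)$ where $G$ is a group and $\mathcal{B}_1,\mathcal{B}_2:G\to G$ are maps such that for all $a,b\in G$: $\mathcal{B}_1(a)\mathcal{B}_1(b)=\mathcal{B}_1(\mathcal{B}_1(a)b\mathcal{B}_2(a))$ and $\mathcal{B}_2(b)\mathcal{B}_2(a)=\mathcal{B}_2(\mathcal{B}_1(a)b\mathcal{B}_2(a))$. Descendent operation: $a\circ b=\mathcal{B}_1(a)b\mathcal{B}_2(a)$. For $t\in G$: $e_t=\mathcal{B}_1(t)^{-1}t\mathcal{B}_2(t)^{-1}$ and $G_t=\{a\in G\mid a\circ e_t=a\}$. *)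

theory Defs
  imports "HOL-Algebra.Group"
begin

definition RB_system :: "('a, 'b) monoid_scheme \<Rightarrow> ('a \<Rightarrow> 'a) \<Rightarrow> ('a \<Rightarrow> 'a) \<Rightarrow> bool" where
  "RB_system G B1 B2 \<longleftrightarrow> group G
     \<and> (\<forall>a\<in>carrier G. B1 a \<in> carrier G \<and> B2 a \<in> carrier G)
     \<and> (\<forall>a\<in>carrier G. \<forall>b\<in>carrier G.
          B1 a \<otimes>\<^bsub>G\<^esub> B1 b = B1 (B1 a \<otimes>\<^bsub>G\<^esub> b \<otimes>\<^bsub>G\<^esub> B2 a)
        \<and> B2 b \<otimes>\<^bsub>G\<^esub> B2 a = B2 (B1 a \<otimes>\<^bsub>G\<^esub> b \<otimes>\<^bsub>G\<^esub> B2 a))"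

definition desc_op :: "('a, 'b) monoid_scheme \<Rightarrow> ('a \<Rightarrow> 'a) \<Rightarrow> ('a \<Rightarrow> 'a) \<Rightarrow> 'a \<Rightarrow> 'a \<Rightarrow> 'a" where
  "desc_op G B1 B2 a b = B1 a \<otimes>\<^bsub>G\<^esub> b \<otimes>\<^bsub>G\<^esub> B2 a"

definition e_elt :: "('a, 'b) monoid_scheme \<Rightarrow> ('a \<Rightarrow> 'a) \<Rightarrow> ('a \<Rightarrow> 'a) \<Rightarrow> 'a \<Rightarrow> 'a" where
  "e_elt G B1 B2 t = inv\<^bsub>G\<^esub> (B1 t) \<otimes>\<^bsub>G\<^esub> t \<otimes>\<^bsub>G\<^esub> inv\<^bsub>G\<^esub> (B2 t)"

definition G_sub :: "('a, 'b) monoid_scheme \<Rightarrow> ('a \<Rightarrow> 'a) \<Rightarrow> ('a \<Rightarrow> 'a) \<Rightarrow> 'a \<Rightarrow> 'a set" where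
  "G_sub G B1 B2 t = {a \<in> carrier G. desc_op G B1 B2 a (e_elt G B1 B2 t) = a}"

end

theory Submission
  imports Defs
begin

locale rbs = group G for G (structure) +
  fixes B1 B2 :: "'a \<Rightarrow> 'a"
  assumes B1c: "a \<in> carrier G \<Longrightarrow> B1 a \<in> carrier G"
    and B2c: "a \<in> carrier G \<Longrightarrow> B2 a \<in> carrier G"
    and ax1: "a \<in> carrier G \<Longrightarrow> b \<in> carrier G \<Longrightarrow> B1 a \<otimes> B1 b = B1 (B1 a \<otimes> b \<otimes> B2 a)"
    and ax2: "a \<in> carrier G \<Longrightarrow> b \<in> carrier G \<Longrightarrow> B2 b \<otimes> B2 a = B2 (B1 a \<otimes> b \<otimes> B2 a)"
begin

abbreviation d where "d a b \<equiv> desc_op G B1 B2 a b"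

lemma dc: "a \<in> carrier G \<Longrightarrow> b \<in> carrier G \<Longrightarrow> d a b \<in> carrier G"
  by (simp add: desc_op_def B1c B2c)

lemma B1d: "a \<in> carrier G \<Longrightarrow> b \<in> carrier G \<Longrightarrow> B1 (d a b) = B1 a \<otimes> B1 b"
  by (simp add: desc_op_def ax1)

lemma B2d: "a \<in> carrier G \<Longrightarrow> b \<in> carrier G \<Longrightarrow> B2 (d a b) = B2 b \<otimes> B2 a"
  by (simp add: desc_op_def ax2)

lemma dassoc: "a \<in> carrier G \<Longrightarrow> b \<in> carrier G \<Longrightarrow> c \<in> carrier G \<Longrightarrow> d (d a b) c = d a (d b c)"
proof -
  assume c: "a \<in> carrier G" "b \<in> carrier G" "c \<in> carrier G"
  have "d (d a b) c = B1 (d a b) \<otimes> c \<otimes> B2 (d a b)" by (simp add: desc_op_def)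
  also have "\<dots> = (B1 a \<otimes> B1 b) \<otimes> c \<otimes> (B2 b \<otimes> B2 a)" using c B1d B2d by simp
  also have "\<dots> = d a (d b c)" using c by (simp add: desc_op_def B1c B2c m_assoc)
  finally show ?thesis .
qed

lemma ec: "t \<in> carrier G \<Longrightarrow> e_elt G B1 B2 t \<in> carrier G"
  by (simp add: e_elt_def B1c B2c)

lemma te: "t \<in> carrier G \<Longrightarrow> d t (e_elt G B1 B2 t) = t"
  by (simp add: e_elt_def desc_op_def B1c B2c m_assoc flip: m_assoc[of "B1 t"])

lemma B1e: assumes "t \<in> carrier G" shows "B1 (e_elt G B1 B2 t) = \<one>"
proof -
  have "B1 t \<otimes> B1 (e_elt G B1 B2 t) = B1 t"
    using B1d[of t "e_elt G B1 B2 t"] te assms ec by simp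
  thus ?thesis using assms ec B1c by simp
qed

lemma B2e: assumes "t \<in> carrier G" shows "B2 (e_elt G B1 B2 t) = \<one>"
proof -
  have "B2 (e_elt G B1 B2 t) \<otimes> B2 t = B2 t"
    using B2d[of t "e_elt G B1 B2 t"] te assms ec by simp
  thus ?thesis using assms ec B2c by simp
qed

lemma el: "t \<in> carrier G \<Longrightarrow> x \<in> carrier G \<Longrightarrow> d (e_elt G B1 B2 t) x = x"
  by (simp add: desc_op_def B1e B2e)

end

theorem lemma4p1:
  fixes G :: "('a, 'b) monoid_scheme" and B1 B2 :: "'a \<Rightarrow> 'a" and t :: 'a
  assumes "RB_system G B1 B2" and "t \<in> carrier G"
  shows "G_sub G B1 B2 t = (\<lambda>a. desc_op G B1 B2 a (e_elt G B1 B2 t)) ` carrier G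
    \<and> group \<lparr>carrier = G_sub G B1 B2 t, mult = desc_op G B1 B2, one = e_elt G B1 B2 t\<rparr>"
proof -
  interpret rbs G B1 B2
    using assms(1) unfolding RB_system_def rbs_def rbs_axioms_def by auto
  define e where "e = e_elt G B1 B2 t"
  have e: "e \<in> carrier G" using ec assms(2) e_def by simp
  have elx: "\<And>x. x \<in> carrier G \<Longrightarrow> d e x = x" using el assms(2) e_def by simp
  have ee: "d e e = e" using elx e by simp
  have S: "G_sub G B1 B2 t = {a \<in> carrier G. d a e = a}" by (simp add: G_sub_def e_def)
  have im: "G_sub G B1 B2 t = (\<lambda>a. d a e) ` carrier G"
  proof
    show "G_sub G B1 B2 t \<subseteq> (\<lambda>a. d a e) ` carrier G" unfolding S by force
    show "(\<lambda>a. d a e) ` carrier G \<subseteq> G_sub G B1 B2 t" unfolding S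
      using dc e dassoc ee by auto
  qed
  define ri where "ri x = d (inv\<^bsub>G\<^esub> (B1 x) \<otimes>\<^bsub>G\<^esub> e \<otimes>\<^bsub>G\<^esub> inv\<^bsub>G\<^esub> (B2 x)) e" for x
  have ric: "x \<in> G_sub G B1 B2 t \<Longrightarrow> ri x \<in> G_sub G B1 B2 t" for x
    unfolding S ri_def using e dc dassoc ee B1c B2c by auto
  have rinv: "x \<in> G_sub G B1 B2 t \<Longrightarrow> d x (ri x) = e" for x
  proof -
    assume x: "x \<in> G_sub G B1 B2 t"
    hence xc: "x \<in> carrier G" unfolding S by auto
    have "d x (inv\<^bsub>G\<^esub> (B1 x) \<otimes>\<^bsub>G\<^esub> e \<otimes>\<^bsub>G\<^esub> inv\<^bsub>G\<^esub> (B2 x)) = e"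
      using xc e B1c B2c by (simp add: desc_op_def m_assoc flip: m_assoc[of "B1 x"])
    thus ?thesis unfolding ri_def
      using dassoc[of x "inv\<^bsub>G\<^esub> (B1 x) \<otimes>\<^bsub>G\<^esub> e \<otimes>\<^bsub>G\<^esub> inv\<^bsub>G\<^esub> (B2 x)" e] xc e B1c B2c ee by simp
  qed
  have linv: "x \<in> G_sub G B1 B2 t \<Longrightarrow> d (ri x) x = e" for x
  proof -
    assume x: "x \<in> G_sub G B1 B2 t"
    let ?r = "ri x" let ?s = "ri (ri x)"
    have r: "?r \<in> G_sub G B1 B2 t" using ric x .
    have s: "?s \<in> G_sub G B1 B2 t" using ric r .
    have cs: "x \<in> carrier G" "?r \<in> carrier G" "?s \<in> carrier G" using x r s S by auto
    have "x = d x e" using x S by auto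
    also have "\<dots> = d x (d ?r ?s)" using rinv r by simp
    also have "\<dots> = d (d x ?r) ?s" using dassoc cs by simp
    also have "\<dots> = ?s" using rinv x elx cs by simp
    finally have "x = ?s" .
    hence "d ?r x = d ?r ?s" by simp
    thus ?thesis using rinv[OF r] by simp
  qed
  have grp: "group \<lparr>carrier = G_sub G B1 B2 t, mult = desc_op G B1 B2, one = e\<rparr>"
  proof (rule groupI, simp_all)
    fix x y assume "x \<in> G_sub G B1 B2 t" "y \<in> G_sub G B1 B2 t"
    thus "d x y \<in> G_sub G B1 B2 t" unfolding S using dc dassoc e by auto
  next
    show "e \<in> G_sub G B1 B2 t" unfolding S using e ee by simp
  next
    fix x y z assume "x \<in> G_sub G B1 B2 t" "y \<in> G_sub G B1 B2 t" "z \<in> G_sub G B1 B2 t"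
    thus "d (d x y) z = d x (d y z)" unfolding S using dassoc by auto
  next
    fix x assume "x \<in> G_sub G B1 B2 t"
    thus "d e x = x" unfolding S using elx by auto
  next
    fix x assume "x \<in> G_sub G B1 B2 t"
    thus "\<exists>y\<in>G_sub G B1 B2 t. d y x = e" using ric linv by blast
  qed
  show ?thesis using im grp e_def by simp
qed

end
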